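(* The collection $\mathrm{RW}=(\mathrm{RW}(n))_{n\ge1}$ of labelled red and white trees, endowed with the compositions $\circ_x$ defined below and with the action of $S_n$ on $\mathrm{RW}(n)$ by relabelling, is a symmetric set-operad (in particular a non-symmetric set-operad, with unit the one-node tree labelled $\{1\}$).
   Context: Labelled red and white trees: for $n\ge1$, $\mathrm{RW}(n)$ is the set of finite rooted trees (children unordered, trees up to label-preserving isomorphism) in which each node $z$ carries a possibly empty label set $L(z)\subseteq[n]=\{1,\dots,n\}$, the sets $L(z)$ partition $[n]$, and every node with $L(z)=\emptyset$ has at least two children. Nodes are coloured: a node with nonempty label set is white; a node with empty label set is red if all its children are white, and white otherwise. The colouring is thus determined by the tree. $S_n$ acts by applying $\sigma$ to all labels. Composition: for $T_1\in\mathrm{RW}(m)$, $T_2\in\mathrm{RW}(n)$, $x\in[m]$, first relabel: in $T_1$ replace every label $y>x$ by $y+n-1$; in $T_2$ replace every label $y$ by $y+x-1$. Let $z$ be the node of $T_1$ with $x\in L(z)$ and $r$ the root of $T_2$. Then $T_1\circ_xT_2\in\mathrm{RW}(m+n-1)$ is: (W) if $r$ is not red: remove $x$ from $L(z)$, add $L(r)$ to $L(z)$, and make the children of $r$ children of $z$ ($r$ disappears); (R1) if $r$ is red and $T_1$ is the single node labelled $\{x\}$: the result is $T_2$; (R2) if $r$ is red and $z$ has at least one child or $|L(z)|\ge2$: remove $x$ from $L(z)$ and attach $T_2$ (with its root $r$) as a new child subtree of $z$; (R3) if $r$ is red, $z$ is a leaf with $L(z)=\{x\}$ and $z$ is not the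 root: let $z'$ be the parent of $z$; delete $z$ and make the children of $r$ children of $z'$. Colours of the result are those given by the colouring rule. *)

theory Defs
  imports "HOL-Library.Multiset" "HOL-Combinatorics.Permutations"
begin

text \<open>P n is the set of operations of arity n; c a x b is the partial composition a \<circ>_x b;
  act \<sigma> a is the action of a permutation \<sigma> of {1..n} (a function nat \<Rightarrow> nat with
  \<sigma> permutes {1..n}) on a \<in> P n; e is the unit.\<close>

definition ns_set_operad ::
  "(nat \<Rightarrow> 'a set) \<Rightarrow> ('a \<Rightarrow> nat \<Rightarrow> 'a \<Rightarrow> 'a) \<Rightarrow> 'a \<Rightarrow> bool" where
  "ns_set_operad P c e \<longleftrightarrow>
     e \<in> P 1 \<and>
     (\<forall>m n a b x. 1 \<le> m \<longrightarrow> 1 \<le> n \<longrightarrow> a \<in> P m \<longrightarrow> b \<in> P n \<longrightarrow> x \<in> {1..m}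
        \<longrightarrow> c a x b \<in> P (m + n - 1)) \<and>
     (\<forall>m a. 1 \<le> m \<longrightarrow> a \<in> P m \<longrightarrow> c e 1 a = a) \<and>
     (\<forall>m a x. 1 \<le> m \<longrightarrow> a \<in> P m \<longrightarrow> x \<in> {1..m} \<longrightarrow> c a x e = a) \<and>
     (\<forall>m n k a b d x y. 1 \<le> m \<longrightarrow> 1 \<le> n \<longrightarrow> 1 \<le> k \<longrightarrow>
        a \<in> P m \<longrightarrow> b \<in> P n \<longrightarrow> d \<in> P k \<longrightarrow> x \<in> {1..m} \<longrightarrow> y \<in> {1..n} \<longrightarrow>
        c (c a x b) (x + y - 1) d = c a x (c b y d)) \<and>
     (\<forall>m n k a b d x y. 1 \<le> m \<longrightarrow> 1 \<le> n \<longrightarrow> 1 \<le> k \<longrightarrow>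
        a \<in> P m \<longrightarrow> b \<in> P n \<longrightarrow> d \<in> P k \<longrightarrow> x \<in> {1..m} \<longrightarrow> y \<in> {1..m} \<longrightarrow> x < y \<longrightarrow>
        c (c a x b) (y + n - 1) d = c (c a y d) x b)"

text \<open>The block permutation \<sigma> \<circ>_x \<tau> of {1..m+n-1} for \<sigma> permuting {1..m} and
  \<tau> permuting {1..n}: the letter x of {1..m} is replaced by the block {x..x+n-1}.\<close>

definition block_perm :: "nat \<Rightarrow> nat \<Rightarrow> nat \<Rightarrow> (nat \<Rightarrow> nat) \<Rightarrow> (nat \<Rightarrow> nat) \<Rightarrow> nat \<Rightarrow> nat" where
  "block_perm m n x \<sigma> \<tau> k =
     (let s = (\<lambda>y. if \<sigma> y < \<sigma> x then \<sigma> y else \<sigma> y + n - 1) in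
      if k < 1 \<or> m + n - 1 < k then k
      else if k < x then s k
      else if k < x + n then \<tau> (k - x + 1) + \<sigma> x - 1
      else s (k - n + 1))"

definition sym_set_operad ::
  "(nat \<Rightarrow> 'a set) \<Rightarrow> ('a \<Rightarrow> nat \<Rightarrow> 'a \<Rightarrow> 'a) \<Rightarrow> ((nat \<Rightarrow> nat) \<Rightarrow> 'a \<Rightarrow> 'a) \<Rightarrow> 'a \<Rightarrow> bool" where
  "sym_set_operad P c act e \<longleftrightarrow>
     ns_set_operad P c e \<and>
     (\<forall>n \<sigma> a. 1 \<le> n \<longrightarrow> \<sigma> permutes {1..n} \<longrightarrow> a \<in> P n \<longrightarrow> act \<sigma> a \<in> P n) \<and>
     (\<forall>n a. 1 \<le> n \<longrightarrow> a \<in> P n \<longrightarrow> act id a = a) \<and>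
     (\<forall>n \<sigma> \<tau> a. 1 \<le> n \<longrightarrow> \<sigma> permutes {1..n} \<longrightarrow> \<tau> permutes {1..n} \<longrightarrow> a \<in> P n \<longrightarrow>
        act (\<sigma> \<circ> \<tau>) a = act \<sigma> (act \<tau> a)) \<and>
     (\<forall>m n \<sigma> \<tau> a b x. 1 \<le> m \<longrightarrow> 1 \<le> n \<longrightarrow> \<sigma> permutes {1..m} \<longrightarrow> \<tau> permutes {1..n} \<longrightarrow>
        a \<in> P m \<longrightarrow> b \<in> P n \<longrightarrow> x \<in> {1..m} \<longrightarrow>
        c (act \<sigma> a) (\<sigma> x) (act \<tau> b) = act (block_perm m n x \<sigma> \<tau>) (c a x b))"

text \<open>Rooted trees with unordered children: the children of a node form a multiset,
  so equality of terms is exactly label-preserving isomorphism of trees.\<close>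

datatype rwt = Node (lbl: "nat set") (kids: "rwt multiset")

primrec labm :: "rwt \<Rightarrow> nat multiset" where
  "labm (Node L cs) = mset_set L + sum_mset (image_mset labm cs)"

primrec rw_ok :: "rwt \<Rightarrow> bool" where
  "rw_ok (Node L cs) \<longleftrightarrow> finite L \<and> (L = {} \<longrightarrow> 2 \<le> size cs) \<and> (\<forall>b \<in># image_mset rw_ok cs. b)"

text \<open>RW(n): label sets partition {1..n} (exact multiplicity one for each label).\<close>
definition RW :: "nat \<Rightarrow> rwt set" where
  "RW n = {T. rw_ok T \<and> labm T = mset_set {1..n}}"

primrec red :: "rwt \<Rightarrow> bool" where
  "red (Node L cs) \<longleftrightarrow> L = {} \<and> (\<forall>b \<in># image_mset red cs. \<not> b)"

primrec relab :: "(nat \<Rightarrow> nat) \<Rightarrow> rwt \<Rightarrow> rwt" where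
  "relab f (Node L cs) = Node (f ` L) (image_mset (relab f) cs)"

definition arity :: "rwt \<Rightarrow> nat" where
  "arity T = size (labm T)"

text \<open>Grafting the (already relabelled) tree S at the node containing x; the result is the
  multiset of trees replacing the current subtree (a single tree, except in case R3 where a
  leaf labelled {x} is replaced by the children of the red root of S).\<close>
primrec graft :: "nat \<Rightarrow> rwt \<Rightarrow> rwt \<Rightarrow> rwt multiset" where
  "graft x S (Node L cs) =
     (if x \<in> L then
        (if \<not> red S then {# Node ((L - {x}) \<union> lbl S) (cs + kids S) #}
         else if cs \<noteq> {#} \<or> L \<noteq> {x} then {# Node (L - {x}) (cs + {# S #}) #}
         else kids S)
      else {# Node L (sum_mset (image_mset (graft x S) cs)) #})"

definition rw_comp :: "rwt \<Rightarrow> nat \<Rightarrow> rwt \<Rightarrow> rwt" where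
  "rw_comp T1 x T2 =
     (let n = arity T2;
          A = relab (\<lambda>y. if x < y then y + n - 1 else y) T1;
          B = relab (\<lambda>y. y + x - 1) T2
      in if red B \<and> A = Node {x} {#} then B
         else the_elem (set_mset (graft x B A)))"

definition rw_act :: "(nat \<Rightarrow> nat) \<Rightarrow> rwt \<Rightarrow> rwt" where
  "rw_act \<sigma> T = relab \<sigma> T"

definition rw_unit :: rwt where
  "rw_unit = Node {1} {#}"

end

theory Submission
  imports Defs
begin

primrec labs :: "rwt \<Rightarrow> nat set" where
  "labs (Node L cs) = L \<union> \<Union> (set_mset (image_mset labs cs))"

abbreviation grF :: "nat \<Rightarrow> rwt \<Rightarrow> rwt multiset \<Rightarrow> rwt multiset" where
  "grF x S M \<equiv> \<Sum>\<^sub># (image_mset (graft x S) M)"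

definition G :: "nat \<Rightarrow> rwt \<Rightarrow> rwt \<Rightarrow> rwt" where
  "G x S T = (if red S \<and> T = Node {x} {#} then S else the_elem (set_mset (graft x S T)))"

lemma sum_image_sum:
  "\<Sum>\<^sub># (image_mset g (\<Sum>\<^sub># (image_mset h M))) = \<Sum>\<^sub># (image_mset (\<lambda>c. \<Sum>\<^sub># (image_mset g (h c))) M)"
  by (induction M) auto

lemma image_sum:
  "image_mset g (\<Sum>\<^sub># (image_mset h M)) = \<Sum>\<^sub># (image_mset (\<lambda>c. image_mset g (h c)) M)"
  by (induction M) auto

lemma graft_notin: "x \<notin> labs T \<Longrightarrow> graft x S T = {#T#}"
proof (induction T)
  case (Node L cs)
  have "grF x S cs = cs"
  proof -
    have "grF x S cs = \<Sum>\<^sub># (image_mset (\<lambda>c. {#c#}) cs)"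
      by (rule arg_cong[where f=sum_mset], rule image_mset_cong) (use Node in auto)
    also have "\<dots> = cs" by (induction cs) auto
    finally show ?thesis .
  qed
  then show ?case using Node by auto
qed

lemma red_relab[simp]: "red (relab f T) = red T"
  by (induction T) auto

lemma rw_ok_relab: "rw_ok T \<Longrightarrow> rw_ok (relab f T)"
  by (induction T) auto

lemma labs_relab[simp]: "labs (relab f T) = f ` labs T"
  by (induction T) auto

lemma relab_comp: "relab f (relab g T) = relab (f \<circ> g) T"
proof (induction T)
  case (Node L cs)
  then show ?case by (auto simp: image_comp multiset.map_comp intro!: image_mset_cong)
qed

lemma relab_cong: "(\<And>y. y \<in> labs T \<Longrightarrow> f y = g y) \<Longrightarrow> relab f T = relab g T"
proof (induction T)
  case (Node L cs)
  then show ?case by (auto intro!: image_mset_cong image_cong)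
qed

lemma relab_id: "relab (\<lambda>y. y) T = T"
  by (induction T) (auto intro: image_mset_cong[where g="\<lambda>x. x", simplified])

lemma graft_nonempty: "rw_ok S \<Longrightarrow> graft x S T \<noteq> {#}"
proof (induction T)
  case (Node L cs)
  show ?case
  proof (cases "x \<in> L")
    case True
    then show ?thesis using Node.prems by (cases S) auto
  qed auto
qed

lemma red_graft: "(\<forall>t\<in>#graft x S T. \<not> red t) \<longleftrightarrow> \<not> red T"
proof (induction T)
  case (Node L cs)
  show ?case
  proof (cases "x \<in> L")
    case True
    then show ?thesis by (cases S) auto
  next
    case False
    have "(\<forall>t\<in>#grF x S cs. \<not> red t) \<longleftrightarrow> (\<forall>c\<in>#cs. \<not> red c)"
      using Node.IH by auto
    then show ?thesis using False by auto
  qed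
qed

primrec uq :: "nat \<Rightarrow> rwt \<Rightarrow> bool" where
  "uq x (Node L cs) = (if x \<in> L then (\<forall>c\<in>#cs. x \<notin> labs c) else (\<forall>b\<in>#image_mset (uq x) cs. b))"

lemma grF_notin: "(\<And>c. c \<in># cs \<Longrightarrow> y \<notin> labs c) \<Longrightarrow> grF y d cs = cs"
proof -
  assume h: "\<And>c. c \<in># cs \<Longrightarrow> y \<notin> labs c"
  have "grF y d cs = \<Sum>\<^sub># (image_mset (\<lambda>c. {#c#}) cs)"
    by (rule arg_cong[where f=sum_mset], rule image_mset_cong) (use h graft_notin in auto)
  also have "\<dots> = cs" by (induction cs) auto
  finally show ?thesis .
qed

lemma the_elem_single[simp]: "the_elem (set_mset {#t#}) = t" by simp

lemma graft_W: "x \<in> L \<Longrightarrow> \<not> red S \<Longrightarrow> graft x S (Node L cs) = {#Node ((L-{x}) \<union> lbl S) (cs + kids S)#}"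
  by simp
lemma graft_R2: "x \<in> L \<Longrightarrow> red S \<Longrightarrow> cs \<noteq> {#} \<or> L \<noteq> {x} \<Longrightarrow> graft x S (Node L cs) = {#Node (L-{x}) (cs + {#S#})#}"
  by auto
lemma graft_R3: "red S \<Longrightarrow> graft x S (Node {x} {#}) = kids S"
  by simp
lemma graft_rec: "x \<notin> L \<Longrightarrow> graft x S (Node L cs) = {#Node L (grF x S cs)#}"
  by simp

declare graft.simps[simp del]

lemma G_single: "\<not> (red S \<and> T = Node {x} {#}) \<Longrightarrow> graft x S T = {#t#} \<Longrightarrow> G x S T = t"
  unfolding G_def by (metis set_mset_single the_elem_eq)

lemma seq_graft:
  "uq x a \<Longrightarrow> y \<notin> labs a - {x} \<Longrightarrow> grF y d (graft x b a) = graft x (G y d b) a"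
proof (induction a)
  case (Node L cs)
  show ?case
  proof (cases "x \<in> L")
    case True
    have ny: "\<And>c. c \<in># cs \<Longrightarrow> y \<notin> labs c" using Node.prems True by auto
    have yL: "y \<notin> L - {x}" using Node.prems by auto
    have gcs: "grF y d cs = cs" using grF_notin ny by blast
    obtain Lb kb where b: "b = Node Lb kb" by (cases b)
    show ?thesis
    proof (cases "red b")
      case nrb: False
      have g1: "graft x b (Node L cs) = {#Node ((L-{x}) \<union> Lb) (cs + kb)#}"
        using graft_W[OF True nrb] b by simp
      show ?thesis
      proof (cases "y \<in> Lb")
        case yb: True
        have yN: "y \<in> (L-{x}) \<union> Lb" using yb by blast
        show ?thesis
        proof (cases "red d")
          case nrd: False
          have e1: "graft y d (Node ((L-{x}) \<union> Lb) (cs + kb)) =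
             {#Node ((((L-{x}) \<union> Lb) - {y}) \<union> lbl d) (cs + kb + kids d)#}"
            using graft_W[OF yN nrd] .
          have e2: "G y d b = Node ((Lb - {y}) \<union> lbl d) (kb + kids d)"
            using G_single[OF _ graft_W[OF yb nrd]] nrd b by simp
          have nr2: "\<not> red (Node ((Lb - {y}) \<union> lbl d) (kb + kids d))"
            using nrd by (cases d) auto
          have e3: "graft x (G y d b) (Node L cs) =
             {#Node ((L-{x}) \<union> ((Lb - {y}) \<union> lbl d)) (cs + (kb + kids d))#}"
            unfolding e2 using graft_W[OF True nr2] by simp
          have "(((L-{x}) \<union> Lb) - {y}) \<union> lbl d = (L-{x}) \<union> ((Lb - {y}) \<union> lbl d)"
            using yL by blast
          then show ?thesis using g1 e1 e3 by (simp add: add.assoc)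
        next
          case rd: True
          show ?thesis
          proof (cases "cs = {#} \<and> L = {x} \<and> kb = {#} \<and> Lb = {y}")
            case lf: True
            have e1: "graft y d (Node ((L-{x}) \<union> Lb) (cs + kb)) = kids d"
              using lf graft_R3[OF rd] by simp
            have e2: "G y d b = d" using lf rd b by (simp add: G_def)
            have e3: "graft x d (Node L cs) = kids d" using lf graft_R3[OF rd] by simp
            show ?thesis using g1 e1 e2 e3 by simp
          next
            case nlf: False
            have nlf2: "cs + kb \<noteq> {#} \<or> (L-{x}) \<union> Lb \<noteq> {y}"
            proof (rule ccontr)
              assume "\<not> ?thesis"
              then have c0: "cs + kb = {#}" and u: "(L-{x}) \<union> Lb = {y}" by simp_all
              then have c1: "cs = {#}" "kb = {#}" by simp_all
              have "Lb \<subseteq> {y}" using u by blast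
              then have "Lb = {y}" using yb by blast
              moreover have "L - {x} \<subseteq> {y}" using u by blast
              then have "L - {x} = {}" using yL by blast
              then have "L = {x}" using True by blast
              ultimately show False using nlf c1 by simp
            qed
            have e1: "graft y d (Node ((L-{x}) \<union> Lb) (cs + kb)) =
               {#Node (((L-{x}) \<union> Lb) - {y}) (cs + kb + {#d#})#}"
              using graft_R2[OF yN rd nlf2] .
            show ?thesis
            proof (cases "b = Node {y} {#}")
              case bl: True
              have Lb1: "Lb = {y}" "kb = {#}" using bl b by auto
              have e2: "G y d b = d" using bl rd by (simp add: G_def)
              have nl: "cs \<noteq> {#} \<or> L \<noteq> {x}" using nlf Lb1 by auto
              have e3: "graft x d (Node L cs) = {#Node (L - {x}) (cs + {#d#})#}"
                using graft_R2[OF True rd nl] .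
              have "((L-{x}) \<union> Lb) - {y} = L - {x}" using yL Lb1 by auto
              then show ?thesis using g1 e1 e2 e3 Lb1 by simp
            next
              case nbl: False
              have nbl2: "kb \<noteq> {#} \<or> Lb \<noteq> {y}" using nbl b by auto
              have e2: "G y d b = Node (Lb - {y}) (kb + {#d#})"
                using G_single[OF _ graft_R2[OF yb rd nbl2]] nbl b by auto
              have nr2: "\<not> red (Node (Lb - {y}) (kb + {#d#}))" using rd by simp
              have e3: "graft x (G y d b) (Node L cs) =
                 {#Node ((L-{x}) \<union> (Lb - {y})) (cs + (kb + {#d#}))#}"
                unfolding e2 using graft_W[OF True nr2] by simp
              have "((L-{x}) \<union> Lb) - {y} = (L-{x}) \<union> (Lb - {y})" using yL by blast
              then show ?thesis using g1 e1 e3 by (simp add: add.assoc)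
            qed
          qed
        qed
      next
        case yb: False
        have yN: "y \<notin> (L-{x}) \<union> Lb" using yb yL by blast
        have e1: "graft y d (Node ((L-{x}) \<union> Lb) (cs + kb)) =
           {#Node ((L-{x}) \<union> Lb) (cs + grF y d kb)#}"
          using graft_rec[OF yN] gcs by simp
        have e2: "G y d b = Node Lb (grF y d kb)"
          using G_single[OF _ graft_rec[OF yb]] yb b by auto
        have nr2: "\<not> red (Node Lb (grF y d kb))"
          using nrb b red_graft[of y d b] graft_rec[OF yb] by simp
        have e3: "graft x (G y d b) (Node L cs) = {#Node ((L-{x}) \<union> Lb) (cs + grF y d kb)#}"
          unfolding e2 using graft_W[OF True nr2] by simp
        show ?thesis using g1 e1 e3 by simp
      qed
    next
      case rb: True
      have Lb: "Lb = {}" using rb b by simp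
      have yb: "y \<notin> Lb" using Lb by simp
      have e2: "G y d b = Node Lb (grF y d kb)"
        using G_single[OF _ graft_rec[OF yb]] Lb b by auto
      have r2: "red (Node Lb (grF y d kb))"
        using rb b red_graft[of y d b] graft_rec[OF yb] Lb by simp
      show ?thesis
      proof (cases "cs = {#} \<and> L = {x}")
        case lf: True
        have "graft x b (Node L cs) = kb" using lf graft_R3[OF rb] b by simp
        moreover have "graft x (G y d b) (Node L cs) = grF y d kb" unfolding e2
          using lf graft_R3[OF r2] by simp
        ultimately show ?thesis by simp
      next
        case nlf: False
        have nl: "cs \<noteq> {#} \<or> L \<noteq> {x}" using nlf by auto
        have yL2: "y \<notin> L - {x}" using yL .
        have "graft x b (Node L cs) = {#Node (L-{x}) (cs + {#b#})#}" using graft_R2[OF True rb nl] .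
        moreover have "graft x (G y d b) (Node L cs) = {#Node (L-{x}) (cs + {#Node Lb (grF y d kb)#})#}"
          unfolding e2 using graft_R2[OF True r2 nl] .
        moreover have "graft y d b = {#Node Lb (grF y d kb)#}" using b graft_rec[OF yb] by simp
        moreover have "graft y d (Node (L-{x}) (cs + {#b#})) = {#Node (L-{x}) (grF y d cs + graft y d b)#}"
          using graft_rec[OF yL2] by simp
        ultimately show ?thesis using gcs by simp
      qed
    qed
  next
    case False
    have "grF y d (grF x b cs) = grF x (G y d b) cs"
      unfolding sum_image_sum
      by (rule arg_cong[where f=sum_mset], rule image_mset_cong) (use Node False in auto)
    moreover have "y \<notin> L" using False Node.prems by auto
    ultimately show ?thesis using False graft_rec by simp
  qed
qed

lemma grF_nonempty: "rw_ok S \<Longrightarrow> cs \<noteq> {#} \<Longrightarrow> grF x S cs \<noteq> {#}"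
  by (induction cs) (auto simp: graft_nonempty)

lemma par_root_nr:
  assumes xL: "x \<in> L" and yL: "y \<in> L" and xy: "x \<noteq> y" and yb: "y \<notin> labs b" and xd: "x \<notin> labs d"
    and okb: "rw_ok b" and nrb: "\<not> red b" and rd: "red d"
  shows "grF y d (graft x b (Node L cs)) = grF x b (graft y d (Node L cs))"
proof -
  obtain Lb kb where b: "b = Node Lb kb" by (cases b)
  have yLb: "y \<notin> Lb" using yb b by simp
  have g1: "graft x b (Node L cs) = {#Node ((L-{x}) \<union> Lb) (cs + kb)#}"
    using graft_W[OF xL nrb] b by simp
  have yN: "y \<in> (L-{x}) \<union> Lb" using yL xy by blast
  have nl: "cs + kb \<noteq> {#} \<or> (L-{x}) \<union> Lb \<noteq> {y}"
  proof (cases "Lb = {}")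
    case True
    then have "kb \<noteq> {#}" using okb b by auto
    then show ?thesis by simp
  next
    case False
    then obtain z where "z \<in> Lb" by blast
    then have "z \<in> (L-{x}) \<union> Lb" "z \<noteq> y" using yLb by auto
    then show ?thesis by blast
  qed
  have e1: "graft y d (Node ((L-{x}) \<union> Lb) (cs + kb)) = {#Node (((L-{x}) \<union> Lb) - {y}) (cs + kb + {#d#})#}"
    using graft_R2[OF yN rd nl] .
  have nl2: "cs \<noteq> {#} \<or> L \<noteq> {y}" using xL xy by auto
  have e2: "graft y d (Node L cs) = {#Node (L-{y}) (cs + {#d#})#}" using graft_R2[OF yL rd nl2] .
  have xL2: "x \<in> L - {y}" using xL xy by simp
  have e3: "graft x b (Node (L-{y}) (cs + {#d#})) = {#Node ((L-{y}-{x}) \<union> Lb) (cs + {#d#} + kb)#}"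
    using graft_W[OF xL2 nrb] b by simp
  have "((L-{x}) \<union> Lb) - {y} = (L-{y}-{x}) \<union> Lb" using yLb by auto
  then show ?thesis using g1 e1 e2 e3 by (simp add: ac_simps)
qed

lemma par_root:
  assumes xL: "x \<in> L" and xy: "x \<noteq> y" and yb: "y \<notin> labs b" and xd: "x \<notin> labs d"
    and okb: "rw_ok b" and okd: "rw_ok d"
  shows "grF y d (graft x b (Node L cs)) = grF x b (graft y d (Node L cs))"
proof -
  obtain Lb kb where b: "b = Node Lb kb" by (cases b)
  obtain Ld kd where d: "d = Node Ld kd" by (cases d)
  have yLb: "y \<notin> Lb" and yk: "\<And>c. c \<in># kb \<Longrightarrow> y \<notin> labs c" using yb b by auto
  have xLd: "x \<notin> Ld" and xk: "\<And>c. c \<in># kd \<Longrightarrow> x \<notin> labs c" using xd d by auto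
  show ?thesis
  proof (cases "y \<in> L")
    case yL: True
    show ?thesis
    proof (cases "red b")
      case nrb: False
      show ?thesis
      proof (cases "red d")
        case nrd: False
        have yN: "y \<in> (L-{x}) \<union> Lb" using yL xy by blast
        have xN: "x \<in> (L-{y}) \<union> Ld" using xL xy by blast
        have g1: "graft x b (Node L cs) = {#Node ((L-{x}) \<union> Lb) (cs + kb)#}"
          using graft_W[OF xL nrb] b by simp
        have g2: "graft y d (Node ((L-{x}) \<union> Lb) (cs + kb)) = {#Node (((L-{x}) \<union> Lb) - {y} \<union> Ld) (cs + kb + kd)#}"
          using graft_W[OF yN nrd] d by simp
        have h1: "graft y d (Node L cs) = {#Node ((L-{y}) \<union> Ld) (cs + kd)#}"
          using graft_W[OF yL nrd] d by simp
        have h2: "graft x b (Node ((L-{y}) \<union> Ld) (cs + kd)) = {#Node (((L-{y}) \<union> Ld) - {x} \<union> Lb) (cs + kd + kb)#}"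
          using graft_W[OF xN nrb] b by simp
        have "((L-{x}) \<union> Lb) - {y} \<union> Ld = ((L-{y}) \<union> Ld) - {x} \<union> Lb" using yLb xLd by auto
        then show ?thesis using g1 g2 h1 h2 by (simp add: ac_simps)
      next
        case rd: True
        show ?thesis using par_root_nr[OF xL yL xy yb xd okb nrb rd] .
      qed
    next
      case rb: True
      show ?thesis
      proof (cases "red d")
        case nrd: False
        show ?thesis using par_root_nr[OF yL xL xy[symmetric] xd yb okd nrd rb] by simp
      next
        case rd: True
        have nl1: "cs \<noteq> {#} \<or> L \<noteq> {x}" using yL xy by auto
        have yN: "y \<in> L - {x}" using yL xy by simp
        have xN: "x \<in> L - {y}" using xL xy by simp
        have g1: "graft x b (Node L cs) = {#Node (L-{x}) (cs + {#b#})#}" using graft_R2[OF xL rb nl1] .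
        have g2: "graft y d (Node (L-{x}) (cs + {#b#})) = {#Node (L-{x}-{y}) (cs + {#b#} + {#d#})#}"
          using graft_R2[OF yN rd] by simp
        have nl2: "cs \<noteq> {#} \<or> L \<noteq> {y}" using xL xy by auto
        have h1: "graft y d (Node L cs) = {#Node (L-{y}) (cs + {#d#})#}" using graft_R2[OF yL rd nl2] .
        have h2: "graft x b (Node (L-{y}) (cs + {#d#})) = {#Node (L-{y}-{x}) (cs + {#d#} + {#b#})#}"
          using graft_R2[OF xN rb] by simp
        have "L-{x}-{y} = L-{y}-{x}" by auto
        then show ?thesis using g1 g2 h1 h2 by (simp add: ac_simps)
      qed
    qed
  next
    case yL: False
    have h1: "graft y d (Node L cs) = {#Node L (grF y d cs)#}" using graft_rec[OF yL] .
    have gkb: "grF y d kb = kb" using grF_notin yk by blast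
    show ?thesis
    proof (cases "red b")
      case nrb: False
      have yN: "y \<notin> (L-{x}) \<union> Lb" using yL yLb by blast
      have g1: "graft x b (Node L cs) = {#Node ((L-{x}) \<union> Lb) (cs + kb)#}"
        using graft_W[OF xL nrb] b by simp
      have g2: "graft y d (Node ((L-{x}) \<union> Lb) (cs + kb)) = {#Node ((L-{x}) \<union> Lb) (grF y d cs + kb)#}"
        using graft_rec[OF yN] gkb by simp
      have h2: "graft x b (Node L (grF y d cs)) = {#Node ((L-{x}) \<union> Lb) (grF y d cs + kb)#}"
        using graft_W[OF xL nrb] b by simp
      show ?thesis using g1 g2 h1 h2 by simp
    next
      case rb: True
      have Lb: "Lb = {}" using rb b by simp
      show ?thesis
      proof (cases "cs = {#} \<and> L = {x}")
        case lf: True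
        have "graft x b (Node L cs) = kb" using lf graft_R3[OF rb] b by simp
        moreover have "graft y d (Node L cs) = {#Node L cs#}" using h1 lf by simp
        ultimately show ?thesis using gkb lf by simp
      next
        case nlf: False
        have nl: "cs \<noteq> {#} \<or> L \<noteq> {x}" using nlf by auto
        have nl2: "grF y d cs \<noteq> {#} \<or> L \<noteq> {x}" using nl grF_nonempty[OF okd] by blast
        have yN: "y \<notin> L - {x}" using yL by simp
        have g1: "graft x b (Node L cs) = {#Node (L-{x}) (cs + {#b#})#}" using graft_R2[OF xL rb nl] .
        have g2: "graft y d (Node (L-{x}) (cs + {#b#})) = {#Node (L-{x}) (grF y d cs + {#b#})#}"
          using graft_rec[OF yN] graft_notin[OF yb] by simp
        have h2: "graft x b (Node L (grF y d cs)) = {#Node (L-{x}) (grF y d cs + {#b#})#}"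
          using graft_R2[OF xL rb nl2] .
        show ?thesis using g1 g2 h1 h2 by simp
      qed
    qed
  qed
qed

lemma par_graft:
  "x \<noteq> y \<Longrightarrow> y \<notin> labs b \<Longrightarrow> x \<notin> labs d \<Longrightarrow> rw_ok b \<Longrightarrow> rw_ok d \<Longrightarrow>
   grF y d (graft x b a) = grF x b (graft y d a)"
proof (induction a)
  case (Node L cs)
  show ?case
  proof (cases "x \<in> L")
    case True
    then show ?thesis using par_root Node.prems by blast
  next
    case xL: False
    show ?thesis
    proof (cases "y \<in> L")
      case True
      then show ?thesis using par_root[of y L x d b cs] Node.prems by simp
    next
      case yL: False
      have "grF y d (grF x b cs) = grF x b (grF y d cs)"
        unfolding sum_image_sum
        by (rule arg_cong[where f=sum_mset], rule image_mset_cong) (use Node in auto)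
      then show ?thesis using xL yL graft_rec by simp
    qed
  qed
qed

lemma G_eq: "T \<noteq> Node {x} {#} \<Longrightarrow> G x S T = the_elem (set_mset (graft x S T))"
  unfolding G_def by simp

lemma G_left_unit: "G x S (Node {x} {#}) = S"
proof (cases "red S")
  case False
  obtain L cs where S: "S = Node L cs" by (cases S)
  have "graft x S (Node {x} {#}) = {#S#}" using graft_W[of x "{x}" S "{#}"] False S by simp
  then show ?thesis by (simp add: G_def)
qed (simp add: G_def)

lemma graft_single: "\<not> (red S \<and> T = Node {x} {#}) \<Longrightarrow> graft x S T = {#G x S T#}"
proof -
  assume h: "\<not> (red S \<and> T = Node {x} {#})"
  obtain L cs where T: "T = Node L cs" by (cases T)
  have "\<exists>t. graft x S T = {#t#}"
  proof (cases "x \<in> L")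
    case True
    show ?thesis
    proof (cases "red S")
      case False
      then show ?thesis using graft_W[OF True False] T by blast
    next
      case rS: True
      then have "cs \<noteq> {#} \<or> L \<noteq> {x}" using h T by auto
      then show ?thesis using graft_R2[OF True rS] T by blast
    qed
  next
    case False
    then show ?thesis using graft_rec[OF False] T by blast
  qed
  then obtain t where t: "graft x S T = {#t#}" by blast
  then have "G x S T = t" using G_single h by blast
  then show ?thesis using t by simp
qed

lemma G_notleaf:
  assumes okS: "rw_ok S" and xT: "x \<in> labs T" and nl: "T \<noteq> Node {x} {#}"
    and yy: "y \<notin> labs T - {x} \<or> y \<notin> labs S"
  shows "G x S T \<noteq> Node {y} {#}"
proof -
  obtain L cs where T: "T = Node L cs" by (cases T)
  obtain Ls ks where S: "S = Node Ls ks" by (cases S)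
  have gs: "graft x S T = {#G x S T#}" using graft_single nl by blast
  show ?thesis
  proof (cases "x \<in> L")
    case True
    show ?thesis
    proof (cases "red S")
      case False
      have "G x S T = Node ((L-{x}) \<union> Ls) (cs + ks)"
        using gs graft_W[OF True False] T S by simp
      moreover have "Node ((L-{x}) \<union> Ls) (cs + ks) \<noteq> Node {y} {#}"
      proof
        assume a: "Node ((L-{x}) \<union> Ls) (cs + ks) = Node {y} {#}"
        then have u: "(L-{x}) \<union> Ls = {y}" and k: "cs = {#}" "ks = {#}" by simp_all
        have "Ls \<noteq> {}" using okS S k by auto
        moreover have "Ls \<subseteq> {y}" using u by (metis Un_upper2)
        ultimately have yLs: "y \<in> Ls" by (metis subset_singletonD singletonI)
        show False
        proof (cases "y \<notin> labs S")
          case True then show ?thesis using yLs S by simp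
        next
          case False
          then have "y \<notin> labs T - {x}" using yy by simp
          then have yL: "y \<notin> L - {x}" using T by auto
          have "L - {x} \<subseteq> {y}" using u by (metis Un_upper1)
          then have "L - {x} = {}" using yL by (metis subset_singletonD singletonI)
          then have "L = {x}" using \<open>x \<in> L\<close> by auto
          then show False using nl T k by simp
        qed
      qed
      ultimately show ?thesis by simp
    next
      case rS: True
      then have "cs \<noteq> {#} \<or> L \<noteq> {x}" using nl T by auto
      then have "G x S T = Node (L-{x}) (cs + {#S#})"
        using gs graft_R2[OF True rS] T by simp
      then show ?thesis by simp
    qed
  next
    case False
    then obtain c where "c \<in># cs" "x \<in> labs c" using xT T by auto
    then have "cs \<noteq> {#}" by auto
    then have "grF x S cs \<noteq> {#}" using grF_nonempty[OF okS] by blast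
    moreover have "G x S T = Node L (grF x S cs)" using gs graft_rec[OF False] T by simp
    ultimately show ?thesis by simp
  qed
qed

lemma G_seq:
  assumes "uq x a" "y \<notin> labs a - {x}" "x \<in> labs a" "rw_ok b"
  shows "G y d (G x b a) = G x (G y d b) a"
proof (cases "a = Node {x} {#}")
  case True
  then show ?thesis by (simp add: G_left_unit)
next
  case False
  have g: "graft x b a = {#G x b a#}" using graft_single False by blast
  have nl: "G x b a \<noteq> Node {y} {#}" using G_notleaf[OF assms(4,3) False] assms(2) by blast
  have "graft y d (G x b a) = graft x (G y d b) a"
    using seq_graft[OF assms(1,2), of d b] g by simp
  then show ?thesis using G_eq[OF nl] G_eq[OF False] by simp
qed

lemma G_par:
  assumes "x \<noteq> y" "x \<in> labs a" "y \<in> labs a" "y \<notin> labs b" "x \<notin> labs d" "rw_ok b" "rw_ok d"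
  shows "G y d (G x b a) = G x b (G y d a)"
proof -
  have n1: "a \<noteq> Node {x} {#}" using assms(1,3) by auto
  have n2: "a \<noteq> Node {y} {#}" using assms(1,2) by auto
  have g1: "graft x b a = {#G x b a#}" using graft_single n1 by blast
  have g2: "graft y d a = {#G y d a#}" using graft_single n2 by blast
  have l1: "G x b a \<noteq> Node {y} {#}" using G_notleaf[OF assms(6,2) n1] assms(4) by blast
  have l2: "G y d a \<noteq> Node {x} {#}" using G_notleaf[OF assms(7,3) n2] assms(5) by blast
  have "graft y d (G x b a) = graft x b (G y d a)"
    using par_graft[OF assms(1,4,5,6,7), of a] g1 g2 by simp
  then show ?thesis using G_eq[OF l1, of d] G_eq[OF l2, of b] by simp
qed

lemma graft_relab:
  "uq x T \<Longrightarrow> (\<forall>z\<in>labs T - {x}. k z = f z) \<Longrightarrow> (\<forall>z\<in>labs S. k z = g z) \<Longrightarrow>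
   f x \<notin> f ` (labs T - {x}) \<Longrightarrow>
   image_mset (relab k) (graft x S T) = graft (f x) (relab g S) (relab f T)"
proof (induction T)
  case (Node L cs)
  obtain Ls ks where S: "S = Node Ls ks" by (cases S)
  have kS: "image_mset (relab k) ks = image_mset (relab g) ks"
    using Node.prems(3) S by (auto intro!: image_mset_cong relab_cong)
  have kLs: "k ` Ls = g ` Ls" using Node.prems(3) S by auto
  have rS: "relab g S = Node (g ` Ls) (image_mset (relab g) ks)" using S by simp
  show ?case
  proof (cases "x \<in> L")
    case True
    have nk: "\<And>c. c \<in># cs \<Longrightarrow> x \<notin> labs c" using Node.prems(1) True by simp
    have kcs: "image_mset (relab k) cs = image_mset (relab f) cs"
      using Node.prems(2) nk by (auto intro!: image_mset_cong relab_cong)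
    have fxL: "f x \<in> f ` L" using True by simp
    have fne: "f z \<noteq> f x" if "z \<in> L" "z \<noteq> x" for z
    proof -
      have "f z \<in> f ` (labs (Node L cs) - {x})" using that by auto
      then show ?thesis using Node.prems(4) by metis
    qed
    have kL: "k ` (L - {x}) = f ` L - {f x}" using Node.prems(2) True fne by auto
    show ?thesis
    proof (cases "red S")
      case False
      have nr: "\<not> red (relab g S)" using False by simp
      have "graft (f x) (relab g S) (relab f (Node L cs)) =
        {#Node ((f ` L - {f x}) \<union> lbl (relab g S)) (image_mset (relab f) cs + kids (relab g S))#}"
        using graft_W[OF fxL nr, of "image_mset (relab f) cs"] by simp
      also have "\<dots> = {#Node ((f ` L - {f x}) \<union> g ` Ls) (image_mset (relab f) cs + image_mset (relab g) ks)#}"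
        using rS by simp
      finally have "graft (f x) (relab g S) (relab f (Node L cs)) =
        {#Node ((f ` L - {f x}) \<union> g ` Ls) (image_mset (relab f) cs + image_mset (relab g) ks)#}" .
      moreover have "graft x S (Node L cs) = {#Node ((L - {x}) \<union> Ls) (cs + ks)#}"
        using graft_W[OF True False] S by simp
      ultimately show ?thesis using kS kLs kcs kL by (simp add: image_Un)
    next
      case rS2: True
      show ?thesis
      proof (cases "cs = {#} \<and> L = {x}")
        case lf: True
        have "graft x S (Node L cs) = ks" using lf graft_R3[OF rS2] S by simp
        moreover have "graft (f x) (relab g S) (relab f (Node L cs)) = image_mset (relab g) ks"
        proof -
          have rr: "red (relab g S)" using rS2 by simp
          have "graft (f x) (relab g S) (Node {f x} {#}) = kids (relab g S)" using graft_R3[OF rr] .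
          then show ?thesis using lf rS by simp
        qed
        ultimately show ?thesis using kS by simp
      next
        case nlf: False
        have nl: "cs \<noteq> {#} \<or> L \<noteq> {x}" using nlf by auto
        have nl2: "image_mset (relab f) cs \<noteq> {#} \<or> f ` L \<noteq> {f x}"
        proof (cases "cs = {#}")
          case False then show ?thesis by simp
        next
          case True
          then have "L \<noteq> {x}" using nl by simp
          then obtain z where "z \<in> L" "z \<noteq> x" using \<open>x \<in> L\<close> by blast
          then have "f z \<noteq> f x" using fne by simp
          then show ?thesis using \<open>z \<in> L\<close> by blast
        qed
        have "graft (f x) (relab g S) (relab f (Node L cs)) =
           {#Node (f ` L - {f x}) (image_mset (relab f) cs + {#relab g S#})#}"
        proof -
          have rr: "red (relab g S)" using rS2 by simp
          show ?thesis using graft_R2[OF fxL rr nl2] by simp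
        qed
        moreover have "graft x S (Node L cs) = {#Node (L - {x}) (cs + {#S#})#}"
          using graft_R2[OF True rS2 nl] .
        moreover have "relab k S = relab g S" using Node.prems(3) by (auto intro: relab_cong)
        ultimately show ?thesis using kcs kL by simp
      qed
    qed
  next
    case False
    have fxL: "f x \<notin> f ` L" using Node.prems(4) False by auto
    have kL: "k ` L = f ` L" by (rule image_cong[OF refl]) (use Node.prems(2) False in auto)
    have "image_mset (relab k) (grF x S cs) = grF (f x) (relab g S) (image_mset (relab f) cs)"
      unfolding image_sum
    proof (simp add: multiset.map_comp comp_def, rule arg_cong[where f=sum_mset], rule image_mset_cong)
      fix c assume c: "c \<in># cs"
      have sub: "labs c - {x} \<subseteq> labs (Node L cs) - {x}" using c by auto
      show "image_mset (relab k) (graft x S c) = graft (f x) (relab g S) (relab f c)"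
      proof (rule Node.IH[OF c])
        show "uq x c" using Node.prems(1) False c by simp
        show "\<forall>z\<in>labs c - {x}. k z = f z" using Node.prems(2) sub by (meson subsetD)
        show "\<forall>z\<in>labs S. k z = g z" using Node.prems(3) .
        show "f x \<notin> f ` (labs c - {x})" using Node.prems(4) image_mono[OF sub] by (meson subsetD)
      qed
    qed
    then show ?thesis using graft_rec[OF False] graft_rec[OF fxL] kL by simp
  qed
qed

lemma G_relab:
  assumes "uq x T" "x \<in> labs T" "\<forall>z\<in>labs T - {x}. k z = f z" "\<forall>z\<in>labs S. k z = g z"
   "f x \<notin> f ` (labs T - {x})"
  shows "relab k (G x S T) = G (f x) (relab g S) (relab f T)"
proof (cases "red S \<and> T = Node {x} {#}")
  case True
  then show ?thesis using assms(4) by (auto simp: G_def intro: relab_cong)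
next
  case False
  have g: "graft x S T = {#G x S T#}" using graft_single False by blast
  have nl: "\<not> (red (relab g S) \<and> relab f T = Node {f x} {#})"
  proof
    assume a: "red (relab g S) \<and> relab f T = Node {f x} {#}"
    obtain L cs where T: "T = Node L cs" by (cases T)
    have cs: "cs = {#}" and fL: "f ` L = {f x}" using a T by auto
    have xL: "x \<in> L" using assms(2) T cs by simp
    have "L = {x}"
    proof (rule ccontr)
      assume "L \<noteq> {x}"
      then obtain z where "z \<in> L" "z \<noteq> x" using xL by blast
      then have "f z \<in> f ` (labs T - {x})" using T by auto
      moreover have "f z = f x" using fL \<open>z \<in> L\<close> by blast
      ultimately show False using assms(5) by simp
    qed
    then show False using False a T cs by simp
  qed
  have "graft (f x) (relab g S) (relab f T) = {#relab k (G x S T)#}"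
    using graft_relab[OF assms(1,3,4,5)] g by simp
  then show ?thesis using G_single[OF nl] by simp
qed

lemma set_labm: "rw_ok T \<Longrightarrow> set_mset (labm T) = labs T"
  by (induction T) auto

lemma labm_sub: "c \<in># cs \<Longrightarrow> labm c \<subseteq># \<Sum>\<^sub># (image_mset labm cs)"
proof -
  assume "c \<in># cs"
  then obtain cs' where "cs = add_mset c cs'" by (metis multi_member_split)
  then show ?thesis by simp
qed

lemma uq_count: "rw_ok T \<Longrightarrow> count (labm T) x \<le> 1 \<Longrightarrow> uq x T"
proof (induction T)
  case (Node L cs)
  have fin: "finite L" using Node.prems by simp
  show ?case
  proof (cases "x \<in> L")
    case True
    have "count (mset_set L) x = 1" using fin True by simp
    then have z: "count (\<Sum>\<^sub># (image_mset labm cs)) x = 0" using Node.prems(2) by simp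
    have "x \<notin> labs c" if c: "c \<in># cs" for c
    proof -
      have "count (labm c) x = 0" using z mset_subset_eq_count[OF labm_sub[OF c], of x] by simp
      moreover have "rw_ok c" using Node.prems(1) c by simp
      ultimately show ?thesis using set_labm[of c] by (metis count_eq_zero_iff)
    qed
    then show ?thesis using True by simp
  next
    case False
    have "uq x c" if c: "c \<in># cs" for c
    proof (rule Node.IH[OF c])
      show "rw_ok c" using Node.prems(1) c by simp
      have "count (labm c) x \<le> count (\<Sum>\<^sub># (image_mset labm cs)) x"
        using mset_subset_eq_count[OF labm_sub[OF c]] .
      then show "count (labm c) x \<le> 1" using Node.prems(2) by simp
    qed
    then show ?thesis using False by simp
  qed
qed

lemma size_grF: "rw_ok S \<Longrightarrow> size cs \<le> size (grF x S cs)"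
proof (induction cs)
  case (add c cs)
  have "graft x S c \<noteq> {#}" using graft_nonempty[OF add.prems] .
  then have "1 \<le> size (graft x S c)" by (simp add: Suc_leI nonempty_has_size)
  then show ?case using add by simp
qed simp

lemma rw_ok_graft: "rw_ok S \<Longrightarrow> rw_ok T \<Longrightarrow> t \<in># graft x S T \<Longrightarrow> rw_ok t"
proof (induction T arbitrary: t)
  case (Node L cs)
  obtain Ls ks where S: "S = Node Ls ks" by (cases S)
  have okS: "finite Ls" "Ls = {} \<Longrightarrow> 2 \<le> size ks" "\<And>c. c \<in># ks \<Longrightarrow> rw_ok c" using Node.prems(1) S by auto
  have okT: "finite L" "L = {} \<Longrightarrow> 2 \<le> size cs" "\<And>c. c \<in># cs \<Longrightarrow> rw_ok c" using Node.prems(2) by auto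
  show ?case
  proof (cases "x \<in> L")
    case True
    show ?thesis
    proof (cases "red S")
      case False
      have t: "t = Node ((L-{x}) \<union> Ls) (cs + ks)" using Node.prems(3) graft_W[OF True False] S by simp
      have "(L-{x}) \<union> Ls = {} \<Longrightarrow> 2 \<le> size (cs + ks)" using okS(2) by auto
      then show ?thesis using t okS okT by auto
    next
      case rS: True
      show ?thesis
      proof (cases "cs = {#} \<and> L = {x}")
        case lf: True
        then have "t \<in># ks" using Node.prems(3) graft_R3[OF rS] S by simp
        then show ?thesis using okS by blast
      next
        case nlf: False
        then have nl: "cs \<noteq> {#} \<or> L \<noteq> {x}" by auto
        have t: "t = Node (L-{x}) (cs + {#S#})" using Node.prems(3) graft_R2[OF True rS nl] by simp
        have "L - {x} = {} \<Longrightarrow> 2 \<le> size (cs + {#S#})"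
        proof -
          assume "L - {x} = {}"
          then have "L = {x}" using True by auto
          then have "cs \<noteq> {#}" using nl by simp
          then have "1 \<le> size cs" by (simp add: Suc_leI nonempty_has_size)
          then show ?thesis by simp
        qed
        then show ?thesis using t okT Node.prems(1) by auto
      qed
    qed
  next
    case False
    have t: "t = Node L (grF x S cs)" using Node.prems(3) graft_rec[OF False] by simp
    have "L = {} \<Longrightarrow> 2 \<le> size (grF x S cs)" using okT(2) size_grF[OF Node.prems(1), of cs x] by linarith
    moreover have "rw_ok u" if u: "u \<in># grF x S cs" for u
    proof -
      obtain c where c: "c \<in># cs" "u \<in># graft x S c" using u by (auto simp: in_Union_mset_iff)
      show ?thesis using Node.IH[OF c(1) Node.prems(1) okT(3)[OF c(1)] c(2)] .
    qed
    ultimately show ?thesis using t okT by auto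
  qed
qed

lemma graft_unit: "graft x (Node {x} {#}) T = {#T#}"
proof (induction T)
  case (Node L cs)
  show ?case
  proof (cases "x \<in> L")
    case True
    have "(L - {x}) \<union> {x} = L" using True by auto
    then show ?thesis using graft_W[OF True, of "Node {x} {#}" cs] by simp
  next
    case False
    have "grF x (Node {x} {#}) cs = \<Sum>\<^sub># (image_mset (\<lambda>c. {#c#}) cs)"
      by (rule arg_cong[where f=sum_mset], rule image_mset_cong) (use Node in auto)
    also have "\<dots> = cs" by (induction cs) auto
    finally show ?thesis using graft_rec[OF False] by simp
  qed
qed

lemma sum_filter_repeat:
  "(\<Sum>c\<in>#cs. filter_mset P (labm c) + repeat_mset (count (labm c) x) M) =
   filter_mset P (\<Sum>\<^sub># (image_mset labm cs)) + repeat_mset (count (\<Sum>\<^sub># (image_mset labm cs)) x) M"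
proof (induction cs)
  case (add c cs)
  then show ?case by (simp add: repeat_mset_distrib ac_simps)
qed simp

lemma filter_noteq_id: "x \<notin># M \<Longrightarrow> filter_mset (\<lambda>y. y \<noteq> x) M = M"
proof (rule multiset_eqI)
  fix y assume "x \<notin># M"
  then show "count (filter_mset (\<lambda>y. y \<noteq> x) M) y = count M y"
    by (cases "y = x") (auto simp: count_eq_zero_iff)
qed

lemma labm_graft:
  "rw_ok T \<Longrightarrow> rw_ok S \<Longrightarrow> uq x T \<Longrightarrow> labs T \<inter> labs S \<subseteq> {x} \<Longrightarrow>
   \<Sum>\<^sub># (image_mset labm (graft x S T)) =
     filter_mset (\<lambda>y. y \<noteq> x) (labm T) + repeat_mset (count (labm T) x) (labm S)"
proof (induction T)
  case (Node L cs)
  obtain Ls ks where S: "S = Node Ls ks" by (cases S)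
  have finL: "finite L" using Node.prems(1) by simp
  have finLs: "finite Ls" using Node.prems(2) S by simp
  show ?case
  proof (cases "x \<in> L")
    case True
    have nk: "\<And>c. c \<in># cs \<Longrightarrow> x \<notin> labs c" using Node.prems(3) True by simp
    have xn: "x \<notin># \<Sum>\<^sub># (image_mset labm cs)"
    proof
      assume "x \<in># \<Sum>\<^sub># (image_mset labm cs)"
      then obtain c where c: "c \<in># cs" "x \<in># labm c" by (auto simp: in_Union_mset_iff)
      have "rw_ok c" using Node.prems(1) c by simp
      then have "labs c = set_mset (labm c)" using set_labm by simp
      then have "x \<in> labs c" using c(2) by simp
      then show False using nk[OF c(1)] by simp
    qed
    have fcs: "filter_mset (\<lambda>y. y \<noteq> x) (\<Sum>\<^sub># (image_mset labm cs)) = \<Sum>\<^sub># (image_mset labm cs)"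
      by (rule filter_noteq_id[OF xn])
    have ccs: "count (\<Sum>\<^sub># (image_mset labm cs)) x = 0"
      using xn by (simp add: count_eq_zero_iff)
    have fL: "filter_mset (\<lambda>y. y \<noteq> x) (mset_set L) = mset_set (L - {x})"
      using finL by (simp add: set_diff_eq)
    have cnt: "count (labm (Node L cs)) x = 1" using ccs finL True by simp
    have rhs: "filter_mset (\<lambda>y. y \<noteq> x) (labm (Node L cs)) + repeat_mset (count (labm (Node L cs)) x) (labm S)
       = mset_set (L - {x}) + \<Sum>\<^sub># (image_mset labm cs) + labm S"
      using fL fcs cnt by simp
    show ?thesis
    proof (cases "red S")
      case False
      have dj: "(L - {x}) \<inter> Ls = {}" using Node.prems(4) S by auto
      have "graft x S (Node L cs) = {#Node ((L-{x}) \<union> Ls) (cs + ks)#}" using graft_W[OF True False] S by simp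
      moreover have "mset_set ((L-{x}) \<union> Ls) = mset_set (L-{x}) + mset_set Ls"
        using mset_set_Union[OF _ finLs dj] finL by simp
      ultimately show ?thesis using rhs S by (simp add: ac_simps)
    next
      case rS: True
      have Ls: "Ls = {}" using rS S by simp
      show ?thesis
      proof (cases "cs = {#} \<and> L = {x}")
        case lf: True
        have "graft x S (Node L cs) = ks" using lf graft_R3[OF rS] S by simp
        then show ?thesis using rhs lf S Ls by simp
      next
        case nlf: False
        then have nl: "cs \<noteq> {#} \<or> L \<noteq> {x}" by auto
        have "graft x S (Node L cs) = {#Node (L-{x}) (cs + {#S#})#}" using graft_R2[OF True rS nl] .
        then show ?thesis using rhs by (simp add: ac_simps)
      qed
    qed
  next
    case False
    have IH: "\<Sum>\<^sub># (image_mset labm (graft x S c)) =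
       filter_mset (\<lambda>y. y \<noteq> x) (labm c) + repeat_mset (count (labm c) x) (labm S)" if c: "c \<in># cs" for c
    proof (rule Node.IH[OF c])
      show "rw_ok c" using Node.prems(1) c by simp
      show "rw_ok S" using Node.prems(2) .
      show "uq x c" using Node.prems(3) False c by simp
      show "labs c \<inter> labs S \<subseteq> {x}" using Node.prems(4) c by auto
    qed
    have "\<Sum>\<^sub># (image_mset labm (grF x S cs)) =
       (\<Sum>c\<in>#cs. filter_mset (\<lambda>y. y \<noteq> x) (labm c) + repeat_mset (count (labm c) x) (labm S))"
      unfolding sum_image_sum by (rule arg_cong[where f=sum_mset], rule image_mset_cong) (use IH in auto)
    also have "\<dots> = filter_mset (\<lambda>y. y \<noteq> x) (\<Sum>\<^sub># (image_mset labm cs)) +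
         repeat_mset (count (\<Sum>\<^sub># (image_mset labm cs)) x) (labm S)"
      by (rule sum_filter_repeat)
    finally have e: "\<Sum>\<^sub># (image_mset labm (grF x S cs)) = \<dots>" .
    have fL: "filter_mset (\<lambda>y. y \<noteq> x) (mset_set L) = mset_set L"
      using finL False by (simp add: filter_noteq_id)
    show ?thesis using graft_rec[OF False] e fL False by (simp add: ac_simps)
  qed
qed

definition isT :: "rwt \<Rightarrow> nat set \<Rightarrow> bool" where
  "isT T A \<longleftrightarrow> rw_ok T \<and> finite A \<and> labm T = mset_set A"

lemma isT_RW: "T \<in> RW n \<longleftrightarrow> isT T {1..n}"
  by (simp add: RW_def isT_def)

lemma isT_labs: "isT T A \<Longrightarrow> labs T = A"
proof -
  assume h: "isT T A"
  then have "rw_ok T" by (simp add: isT_def)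
  then have "labs T = set_mset (labm T)" using set_labm by metis
  also have "\<dots> = A" using h by (simp add: isT_def)
  finally show ?thesis .
qed

lemma isT_uq: "isT T A \<Longrightarrow> uq x T"
  by (rule uq_count) (auto simp: isT_def count_mset_set')

lemma labm_relab: "rw_ok T \<Longrightarrow> inj_on f (labs T) \<Longrightarrow> labm (relab f T) = image_mset f (labm T)"
proof (induction T)
  case (Node L cs)
  have "inj_on f L" using Node.prems(2) by (auto intro: inj_on_subset)
  then have "mset_set (f ` L) = image_mset f (mset_set L)" by (simp add: image_mset_mset_set)
  moreover have "image_mset (\<lambda>c. labm (relab f c)) cs = image_mset (\<lambda>c. image_mset f (labm c)) cs"
  proof (rule image_mset_cong)
    fix c assume c: "c \<in># cs"
    show "labm (relab f c) = image_mset f (labm c)"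
    proof (rule Node.IH[OF c])
      show "rw_ok c" using Node.prems(1) c by simp
      show "inj_on f (labs c)" using Node.prems(2) c by (auto intro: inj_on_subset)
    qed
  qed
  ultimately show ?case by (simp add: image_sum multiset.map_comp comp_def)
qed

lemma isT_relab: "isT T A \<Longrightarrow> inj_on f A \<Longrightarrow> isT (relab f T) (f ` A)"
proof -
  assume h: "isT T A" "inj_on f A"
  have l: "labs T = A" using isT_labs[OF h(1)] .
  have "labm (relab f T) = image_mset f (labm T)"
    using labm_relab h l by (simp add: isT_def)
  then show ?thesis using h rw_ok_relab by (simp add: isT_def image_mset_mset_set)
qed

lemma isT_arity: "isT T A \<Longrightarrow> arity T = card A"
  by (simp add: isT_def arity_def)

lemma isT_G:
  assumes T: "isT T A" and S: "isT S B" and x: "x \<in> A" and d: "A \<inter> B \<subseteq> {x}"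
  shows "isT (G x S T) ((A - {x}) \<union> B)"
proof (cases "red S \<and> T = Node {x} {#}")
  case True
  then have "A = {x}" using isT_labs[OF T] by simp
  then have "(A - {x}) \<union> B = B" by simp
  then show ?thesis using True S by (simp add: G_def)
next
  case False
  have g: "graft x S T = {#G x S T#}" using graft_single False by blast
  have okT: "rw_ok T" and okS: "rw_ok S" using T S by (auto simp: isT_def)
  have ok: "rw_ok (G x S T)" by (rule rw_ok_graft[OF okS okT, of _ x]) (simp add: g)
  have lT: "labs T = A" and lS: "labs S = B" using isT_labs T S by auto
  have "labm (G x S T) = filter_mset (\<lambda>y. y \<noteq> x) (labm T) + repeat_mset (count (labm T) x) (labm S)"
  proof -
    have dd: "labs T \<inter> labs S \<subseteq> {x}" using d lT lS by simp
    show ?thesis using labm_graft[OF okT okS isT_uq[OF T, of x] dd] g by simp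
  qed
  also have "\<dots> = mset_set (A - {x}) + mset_set B"
    using T S x by (simp add: isT_def set_diff_eq)
  also have "\<dots> = mset_set ((A - {x}) \<union> B)"
    using T S d by (intro mset_set_Union[symmetric]) (auto simp: isT_def)
  finally show ?thesis using ok T S by (simp add: isT_def)
qed

definition sh :: "nat \<Rightarrow> nat \<Rightarrow> nat \<Rightarrow> nat" where
  "sh x n = (\<lambda>y. if x < y then y + n - 1 else y)"
definition up :: "nat \<Rightarrow> nat \<Rightarrow> nat" where
  "up x = (\<lambda>y. y + x - 1)"

lemma rw_comp_G: "rw_comp T1 x T2 = G x (relab (up x) T2) (relab (sh x (arity T2)) T1)"
  by (simp add: rw_comp_def G_def Let_def up_def sh_def)

lemma inj_sh: "1 \<le> n \<Longrightarrow> inj (sh x n)"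
  by (auto simp: inj_on_def sh_def split: if_splits)

lemma inj_up: "1 \<le> x \<Longrightarrow> inj (up x)"
  by (auto simp: inj_on_def up_def)

lemma sh_img: "1 \<le> x \<Longrightarrow> x \<le> m \<Longrightarrow> 1 \<le> n \<Longrightarrow> sh x n ` {1..m} = {1..x} \<union> {x+n..m+n-1}"
proof (intro equalityI subsetI)
  fix y assume "1 \<le> x" "x \<le> m" "1 \<le> n" "y \<in> sh x n ` {1..m}"
  then show "y \<in> {1..x} \<union> {x+n..m+n-1}" by (auto simp: sh_def)
next
  fix y assume a: "1 \<le> x" "x \<le> m" "1 \<le> n" "y \<in> {1..x} \<union> {x+n..m+n-1}"
  show "y \<in> sh x n ` {1..m}"
  proof (cases "y \<le> x")
    case True
    then have "y = sh x n y" "y \<in> {1..m}" using a by (auto simp: sh_def)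
    then show ?thesis by blast
  next
    case False
    then have "y = sh x n (y - n + 1)" "y - n + 1 \<in> {1..m}" using a by (auto simp: sh_def)
    then show ?thesis by blast
  qed
qed

lemma up_img: "1 \<le> x \<Longrightarrow> up x ` {1..n} = {x..x+n-1}"
proof (intro equalityI subsetI)
  fix y assume "1 \<le> x" "y \<in> up x ` {1..n}"
  then show "y \<in> {x..x+n-1}" by (auto simp: up_def)
next
  fix y assume a: "1 \<le> x" "y \<in> {x..x+n-1}"
  then have "y = up x (y - x + 1)" "y - x + 1 \<in> {1..n}" by (auto simp: up_def)
  then show "y \<in> up x ` {1..n}" by blast
qed

lemma comp_closed:
  assumes a: "isT a {1..m}" and b: "isT b {1..n}" and x: "1 \<le> x" "x \<le> m" and n: "1 \<le> n"
  shows "isT (rw_comp a x b) {1..m+n-1}"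
proof -
  have ar: "arity b = n" using isT_arity[OF b] by simp
  have A: "isT (relab (sh x n) a) ({1..x} \<union> {x+n..m+n-1})"
    using isT_relab[OF a inj_on_subset[OF inj_sh[OF n, of x]]] sh_img[OF x n] by simp
  have B: "isT (relab (up x) b) {x..x+n-1}"
    using isT_relab[OF b inj_on_subset[OF inj_up[OF x(1)]]] up_img[OF x(1)] by simp
  have "isT (G x (relab (up x) b) (relab (sh x n) a)) ((({1..x} \<union> {x+n..m+n-1}) - {x}) \<union> {x..x+n-1})"
    by (rule isT_G[OF A B]) (use x n in auto)
  moreover have "(({1..x} \<union> {x+n..m+n-1}) - {x}) \<union> {x..x+n-1} = {1..m+n-1}"
    using x n by auto
  ultimately show ?thesis by (simp add: rw_comp_G ar)
qed

lemma sh_sh_seq: "1 \<le> x \<Longrightarrow> 1 \<le> y \<Longrightarrow> y \<le> n \<Longrightarrow> 1 \<le> k \<Longrightarrow> sh (x+y-1) k \<circ> sh x n = sh x (n+k-1)"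
  by (rule ext) (auto simp: sh_def)

lemma sh_up_seq: "1 \<le> x \<Longrightarrow> 1 \<le> k \<Longrightarrow> sh (x+y-1) k \<circ> up x = up x \<circ> sh y k"
  by (rule ext) (auto simp: sh_def up_def)

lemma up_up: "1 \<le> x \<Longrightarrow> 1 \<le> y \<Longrightarrow> up x \<circ> up y = up (x+y-1)"
  by (rule ext) (auto simp: up_def)

lemma sh_sh_par: "x < y \<Longrightarrow> 1 \<le> n \<Longrightarrow> 1 \<le> k \<Longrightarrow> sh (y+n-1) k \<circ> sh x n = sh x n \<circ> sh y k"
  by (rule ext) (auto simp: sh_def)

lemma inj_not_in: "inj f \<Longrightarrow> f x \<notin> f ` (A - {x})"
  by (auto simp: inj_def)

lemma comp_left_unit: "rw_comp rw_unit 1 a = a"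
proof -
  have "relab (sh 1 (arity a)) (Node {1} {#}) = Node {1} {#}" by (simp add: sh_def)
  moreover have "relab (up 1) a = a" using relab_id by (simp add: up_def)
  ultimately show ?thesis by (simp add: rw_comp_G rw_unit_def G_left_unit)
qed

lemma comp_right_unit: "1 \<le> x \<Longrightarrow> rw_comp a x rw_unit = a"
proof -
  assume x: "1 \<le> x"
  have ar: "arity (Node {1} {#}) = 1" by (simp add: arity_def)
  have "sh x 1 = (\<lambda>y. y)" by (rule ext) (simp add: sh_def)
  then have "relab (sh x 1) a = a" using relab_id by simp
  moreover have "relab (up x) (Node {1} {#}) = Node {x} {#}" using x by (simp add: up_def)
  moreover have "G x (Node {x} {#}) a = a"
    by (simp add: G_def graft_unit)
  ultimately show ?thesis unfolding rw_comp_G rw_unit_def ar by simp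
qed

lemma comp_seq:
  assumes a: "isT a {1..m}" and b: "isT b {1..n}" and d: "isT d {1..k}"
    and x: "1 \<le> x" "x \<le> m" and y: "1 \<le> y" "y \<le> n" and k: "1 \<le> k"
  shows "rw_comp (rw_comp a x b) (x+y-1) d = rw_comp a x (rw_comp b y d)"
proof -
  have n: "1 \<le> n" using y by simp
  have arb: "arity b = n" and ard: "arity d = k" using isT_arity b d by auto
  have bd: "isT (rw_comp b y d) {1..n+k-1}" using comp_closed[OF b d y k] .
  have arbd: "arity (rw_comp b y d) = n+k-1" using isT_arity[OF bd] by simp
  define Y where "Y = x + y - 1"
  define T0 where "T0 = relab (sh x n) a"
  define S0 where "S0 = relab (up x) b"
  have T0: "isT T0 (sh x n ` {1..m})" unfolding T0_def
    using isT_relab[OF a inj_on_subset[OF inj_sh[OF n, of x]]] by simp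
  have xT0: "x \<in> labs T0" using isT_labs[OF T0] x by (auto simp: sh_def)
  have L1: "relab (sh Y k) (G x S0 T0) = G (sh Y k x) (relab (sh Y k) S0) (relab (sh Y k) T0)"
    by (rule G_relab[OF isT_uq[OF T0] xT0]) (auto simp: inj_not_in[OF inj_sh[OF k]])
  have e1: "sh Y k x = x" using y by (simp add: sh_def Y_def)
  have e2: "relab (sh Y k) S0 = relab (up x) (relab (sh y k) b)"
    unfolding S0_def relab_comp Y_def sh_up_seq[OF x(1) k] ..
  have e3: "relab (sh Y k) T0 = relab (sh x (n+k-1)) a"
    unfolding T0_def relab_comp Y_def sh_sh_seq[OF x(1) y k] ..
  have LHS: "rw_comp (rw_comp a x b) Y d = G Y (relab (up Y) d) (G x (relab (up x) (relab (sh y k) b)) (relab (sh x (n+k-1)) a))"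
    using L1 e1 e2 e3 by (simp add: rw_comp_G arb ard T0_def S0_def)
  define T1 where "T1 = relab (sh y k) b"
  have T1: "isT T1 (sh y k ` {1..n})" unfolding T1_def
    using isT_relab[OF b inj_on_subset[OF inj_sh[OF k, of y]]] by simp
  have yT1: "y \<in> labs T1" using isT_labs[OF T1] y by (auto simp: sh_def)
  have R1: "relab (up x) (G y (relab (up y) d) T1) = G (up x y) (relab (up x) (relab (up y) d)) (relab (up x) T1)"
    by (rule G_relab[OF isT_uq[OF T1] yT1]) (auto simp: inj_not_in[OF inj_up[OF x(1)]])
  have f1: "up x y = Y" by (simp add: up_def Y_def)
  have f2: "relab (up x) (relab (up y) d) = relab (up Y) d"
    unfolding relab_comp Y_def up_up[OF x(1) y(1)] ..
  have RHS: "rw_comp a x (rw_comp b y d) = G x (G Y (relab (up Y) d) (relab (up x) (relab (sh y k) b))) (relab (sh x (n+k-1)) a)"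
  proof -
    have h1: "rw_comp a x (rw_comp b y d) = G x (relab (up x) (rw_comp b y d)) (relab (sh x (n+k-1)) a)"
      by (simp only: rw_comp_G[of a x "rw_comp b y d"] arbd)
    have h2: "rw_comp b y d = G y (relab (up y) d) T1" by (simp add: rw_comp_G ard T1_def)
    show ?thesis using h1 h2 R1 f1 f2 by (simp add: T1_def)
  qed
  define a' where "a' = relab (sh x (n+k-1)) a"
  have nk: "1 \<le> n+k-1" using n k by simp
  have A': "isT a' (sh x (n+k-1) ` {1..m})" unfolding a'_def
    using isT_relab[OF a inj_on_subset[OF inj_sh[OF nk, of x]]] by simp
  have xa: "x \<in> labs a'" using isT_labs[OF A'] x by (auto simp: sh_def)
  have Ya: "Y \<notin> labs a' - {x}" using isT_labs[OF A'] x y k by (auto simp: sh_def Y_def)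
  have okb: "rw_ok (relab (up x) (relab (sh y k) b))" using b by (simp add: isT_def rw_ok_relab)
  have "G Y (relab (up Y) d) (G x (relab (up x) (relab (sh y k) b)) a') =
        G x (G Y (relab (up Y) d) (relab (up x) (relab (sh y k) b))) a'"
    by (rule G_seq[OF isT_uq[OF A'] Ya xa okb])
  then show ?thesis using LHS RHS by (simp add: a'_def Y_def)
qed

lemma comp_par:
  assumes a: "isT a {1..m}" and b: "isT b {1..n}" and d: "isT d {1..k}"
    and x: "1 \<le> x" "x < y" "y \<le> m" and n: "1 \<le> n" and k: "1 \<le> k"
  shows "rw_comp (rw_comp a x b) (y+n-1) d = rw_comp (rw_comp a y d) x b"
proof -
  have arb: "arity b = n" and ard: "arity d = k" using isT_arity b d by auto
  have y1: "1 \<le> y" using x by simp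
  define Y where "Y = y + n - 1"
  define s1 where "s1 = sh Y k"
  define T0 where "T0 = relab (sh x n) a"
  have T0: "isT T0 (sh x n ` {1..m})" unfolding T0_def
    using isT_relab[OF a inj_on_subset[OF inj_sh[OF n, of x]]] by simp
  have xT0: "x \<in> labs T0" using isT_labs[OF T0] x by (auto simp: sh_def)
  have L1: "relab s1 (G x (relab (up x) b) T0) = G (s1 x) (relab s1 (relab (up x) b)) (relab s1 T0)"
    by (rule G_relab[OF isT_uq[OF T0] xT0]) (auto simp: s1_def inj_not_in[OF inj_sh[OF k]])
  have e1: "s1 x = x" using x by (simp add: s1_def sh_def Y_def)
  have e2: "relab s1 (relab (up x) b) = relab (up x) b"
    unfolding relab_comp
  proof (rule relab_cong)
    fix z assume "z \<in> labs b"
    then have "z \<le> n" using isT_labs[OF b] by auto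
    then show "(s1 \<circ> up x) z = up x z" using x by (auto simp: s1_def sh_def up_def Y_def)
  qed
  define a1 where "a1 = relab (s1 \<circ> sh x n) a"
  have LHS: "rw_comp (rw_comp a x b) Y d = G Y (relab (up Y) d) (G x (relab (up x) b) a1)"
    using L1 e1 e2 by (simp add: rw_comp_G arb ard T0_def a1_def relab_comp s1_def)
  define T1 where "T1 = relab (sh y k) a"
  have T1: "isT T1 (sh y k ` {1..m})" unfolding T1_def
    using isT_relab[OF a inj_on_subset[OF inj_sh[OF k, of y]]] by simp
  have yT1: "y \<in> labs T1" using isT_labs[OF T1] x by (auto simp: sh_def)
  have R1: "relab (sh x n) (G y (relab (up y) d) T1) = G (sh x n y) (relab (sh x n) (relab (up y) d)) (relab (sh x n) T1)"
    by (rule G_relab[OF isT_uq[OF T1] yT1]) (auto simp: inj_not_in[OF inj_sh[OF n]])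
  have f1: "sh x n y = Y" using x by (simp add: sh_def Y_def)
  have f2: "relab (sh x n) (relab (up y) d) = relab (up Y) d"
    unfolding relab_comp
  proof (rule relab_cong)
    fix z assume "z \<in> labs d"
    then have "1 \<le> z" using isT_labs[OF d] by auto
    then show "(sh x n \<circ> up y) z = up Y z" using x n by (auto simp: sh_def up_def Y_def)
  qed
  have f3: "relab (sh x n) T1 = a1"
    unfolding T1_def a1_def relab_comp s1_def Y_def sh_sh_par[OF x(2) n k] ..
  have RHS: "rw_comp (rw_comp a y d) x b = G x (relab (up x) b) (G Y (relab (up Y) d) a1)"
    using R1 f1 f2 f3 by (simp add: rw_comp_G arb ard T1_def)
  have s1i: "inj s1" using inj_sh[OF k] by (simp add: s1_def)
  have A1: "isT a1 ((s1 \<circ> sh x n) ` {1..m})" unfolding a1_def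
    using isT_relab[OF a inj_on_subset[OF inj_compose[OF s1i inj_sh[OF n, of x]]]] by simp
  have xa: "x \<in> labs a1"
  proof -
    have "(s1 \<circ> sh x n) x = x" using e1 by (simp add: sh_def)
    then show ?thesis using isT_labs[OF A1] x by (metis atLeastAtMost_iff image_eqI less_imp_le y1 order_trans)
  qed
  have Ya: "Y \<in> labs a1"
  proof -
    have "(s1 \<circ> sh x n) y = Y" using x by (simp add: s1_def sh_def Y_def)
    then show ?thesis using isT_labs[OF A1] x by (metis atLeastAtMost_iff image_eqI y1)
  qed
  have xY: "x \<noteq> Y" using x n by (simp add: Y_def)
  have Yb: "Y \<notin> labs (relab (up x) b)" using isT_labs[OF b] x by (auto simp: up_def Y_def)
  have xd: "x \<notin> labs (relab (up Y) d)" using isT_labs[OF d] x n by (auto simp: up_def Y_def)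
  have okb: "rw_ok (relab (up x) b)" and okd: "rw_ok (relab (up Y) d)"
    using b d by (auto simp: isT_def rw_ok_relab)
  have "G Y (relab (up Y) d) (G x (relab (up x) b) a1) = G x (relab (up x) b) (G Y (relab (up Y) d) a1)"
    by (rule G_par[OF xY xa Ya Yb xd okb okd])
  then show ?thesis using LHS RHS by (simp add: Y_def)
qed

lemma block1:
  assumes s: "\<sigma> permutes {1..m}" and x: "1 \<le> x" "x \<le> m" and z: "1 \<le> z" "z \<le> m" "z \<noteq> x" and n: "1 \<le> n"
  shows "block_perm m n x \<sigma> \<tau> (sh x n z) = sh (\<sigma> x) n (\<sigma> z)"
proof -
  have ne: "\<sigma> z \<noteq> \<sigma> x" using permutes_inj[OF s] z(3) by (auto simp: inj_def)
  show ?thesis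
  proof (cases "z < x")
    case True
    then show ?thesis using ne x z n by (auto simp: block_perm_def Let_def sh_def)
  next
    case False
    then have "x < z" using z(3) by simp
    then show ?thesis using ne x z n by (auto simp: block_perm_def Let_def sh_def)
  qed
qed

lemma block2:
  assumes x: "1 \<le> x" "x \<le> m" and z: "1 \<le> z" "z \<le> n"
  shows "block_perm m n x \<sigma> \<tau> (up x z) = up (\<sigma> x) (\<tau> z)"
  using x z by (auto simp: block_perm_def Let_def up_def)

lemma comp_equiv:
  assumes a: "isT a {1..m}" and b: "isT b {1..n}" and s: "\<sigma> permutes {1..m}" and t: "\<tau> permutes {1..n}"
    and x: "1 \<le> x" "x \<le> m" and n: "1 \<le> n"
  shows "rw_comp (relab \<sigma> a) (\<sigma> x) (relab \<tau> b) = relab (block_perm m n x \<sigma> \<tau>) (rw_comp a x b)"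
proof -
  define \<beta> where "\<beta> = block_perm m n x \<sigma> \<tau>"
  have arb: "arity b = n" using isT_arity b by auto
  have bt: "isT (relab \<tau> b) (\<tau> ` {1..n})" using isT_relab[OF b permutes_inj_on[OF t]] .
  have art: "arity (relab \<tau> b) = n" using isT_arity[OF bt] permutes_image[OF t] by simp
  define T0 where "T0 = relab (sh x n) a"
  have T0: "isT T0 (sh x n ` {1..m})" unfolding T0_def
    using isT_relab[OF a inj_on_subset[OF inj_sh[OF n, of x]]] by simp
  have shx: "sh x n x = x" by (simp add: sh_def)
  have "x \<in> sh x n ` {1..m}" by (rule image_eqI[of _ _ x]) (use x shx in auto)
  then have xT0: "x \<in> labs T0" using isT_labs[OF T0] by simp
  define f where "f = (\<lambda>z. if z = x then \<sigma> x else \<beta> z)"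
  have shz: "sh x n z \<noteq> x" if zx: "z \<noteq> x" for z
  proof
    assume "sh x n z = x"
    then have "sh x n z = sh x n x" using shx by simp
    then have "z = x" by (rule injD[OF inj_sh[OF n]])
    then show False using zx by simp
  qed
  have fsh: "f (sh x n z) = sh (\<sigma> x) n (\<sigma> z)" if z: "1 \<le> z" "z \<le> m" for z
  proof (cases "z = x")
    case True
    then show ?thesis using shx by (simp add: f_def sh_def)
  next
    case False
    then show ?thesis using shz[OF False] block1[OF s x z False n] by (simp add: f_def \<beta>_def)
  qed
  have fx: "f x \<notin> f ` (labs T0 - {x})"
  proof
    assume "f x \<in> f ` (labs T0 - {x})"
    then obtain u where u0: "f x = f u" "u \<in> labs T0 - {x}" by (rule imageE)
    then have u: "u \<in> labs T0" "u \<noteq> x" "f u = f x" by auto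
    then have "u \<in> sh x n ` {1..m}" using isT_labs[OF T0] by simp
    then obtain z where z2: "u = sh x n z" and z1: "z \<in> {1..m}" by (rule imageE)
    have z: "z \<in> {1..m}" "u = sh x n z" using z1 z2 by auto
    have zx: "z \<noteq> x" using u z shx by auto
    have z1: "1 \<le> z" "z \<le> m" using z(1) by auto
    have fz: "f u = sh (\<sigma> x) n (\<sigma> z)" using fsh[OF z1] z(2) by simp
    have "f x = \<sigma> x" by (simp add: f_def)
    then have "sh (\<sigma> x) n (\<sigma> z) = \<sigma> x" using fz u(3) by simp
    moreover have "\<sigma> z \<noteq> \<sigma> x" using permutes_inj[OF s] zx by (auto simp: inj_def)
    ultimately show False using n by (simp add: sh_def split: if_splits)
  qed
  have G1: "relab \<beta> (G x (relab (up x) b) T0) = G (f x) (relab \<beta> (relab (up x) b)) (relab f T0)"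
    by (rule G_relab[OF isT_uq[OF T0] xT0 _ _ fx]) (auto simp: f_def)
  have e1: "f x = \<sigma> x" by (simp add: f_def)
  have e2: "relab \<beta> (relab (up x) b) = relab (up (\<sigma> x)) (relab \<tau> b)"
    unfolding relab_comp
  proof (rule relab_cong)
    fix z assume "z \<in> labs b"
    then have "1 \<le> z" "z \<le> n" using isT_labs[OF b] by auto
    then show "(\<beta> \<circ> up x) z = (up (\<sigma> x) \<circ> \<tau>) z" using block2[OF x] by (simp add: \<beta>_def)
  qed
  have e3: "relab f T0 = relab (sh (\<sigma> x) n) (relab \<sigma> a)"
    unfolding T0_def relab_comp
  proof (rule relab_cong)
    fix z assume "z \<in> labs a"
    then have "1 \<le> z" "z \<le> m" using isT_labs[OF a] by auto
    then show "(f \<circ> sh x n) z = (sh (\<sigma> x) n \<circ> \<sigma>) z" using fsh by simp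
  qed
  show ?thesis using G1 e1 e2 e3 by (simp add: rw_comp_G arb art T0_def \<beta>_def)
qed

theorem mainTheorem5:
  shows "sym_set_operad RW rw_comp rw_act rw_unit"
proof -
  have unit: "rw_unit \<in> RW 1" by (simp add: RW_def rw_unit_def)
  have closed: "\<forall>m n a b x. 1 \<le> m \<longrightarrow> 1 \<le> n \<longrightarrow> a \<in> RW m \<longrightarrow> b \<in> RW n \<longrightarrow> x \<in> {1..m}
        \<longrightarrow> rw_comp a x b \<in> RW (m + n - 1)"
    using comp_closed by (auto simp: isT_RW)
  have lu: "\<forall>m a. 1 \<le> m \<longrightarrow> a \<in> RW m \<longrightarrow> rw_comp rw_unit 1 a = a"
    using comp_left_unit by blast
  have ru: "\<forall>m a x. 1 \<le> m \<longrightarrow> a \<in> RW m \<longrightarrow> x \<in> {1..m} \<longrightarrow> rw_comp a x rw_unit = a"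
    using comp_right_unit by auto
  have seq: "\<forall>m n k a b d x y. 1 \<le> m \<longrightarrow> 1 \<le> n \<longrightarrow> 1 \<le> k \<longrightarrow>
        a \<in> RW m \<longrightarrow> b \<in> RW n \<longrightarrow> d \<in> RW k \<longrightarrow> x \<in> {1..m} \<longrightarrow> y \<in> {1..n} \<longrightarrow>
        rw_comp (rw_comp a x b) (x + y - 1) d = rw_comp a x (rw_comp b y d)"
    using comp_seq by (auto simp: isT_RW)
  have par: "\<forall>m n k a b d x y. 1 \<le> m \<longrightarrow> 1 \<le> n \<longrightarrow> 1 \<le> k \<longrightarrow>
        a \<in> RW m \<longrightarrow> b \<in> RW n \<longrightarrow> d \<in> RW k \<longrightarrow> x \<in> {1..m} \<longrightarrow> y \<in> {1..m} \<longrightarrow> x < y \<longrightarrow>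
        rw_comp (rw_comp a x b) (y + n - 1) d = rw_comp (rw_comp a y d) x b"
    using comp_par by (auto simp: isT_RW)
  have act1: "\<forall>n \<sigma> a. 1 \<le> n \<longrightarrow> \<sigma> permutes {1..n} \<longrightarrow> a \<in> RW n \<longrightarrow> rw_act \<sigma> a \<in> RW n"
  proof (intro allI impI)
    fix n \<sigma> a assume h: "1 \<le> n" "\<sigma> permutes {1..n}" "a \<in> RW n"
    have "isT (relab \<sigma> a) (\<sigma> ` {1..n})"
      using isT_relab[OF _ permutes_inj_on[OF h(2)]] h(3) by (simp add: isT_RW)
    then show "rw_act \<sigma> a \<in> RW n" using permutes_image[OF h(2)] by (simp add: isT_RW rw_act_def)
  qed
  have act2: "\<forall>n a. 1 \<le> n \<longrightarrow> a \<in> RW n \<longrightarrow> rw_act id a = a"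
    using relab_id by (simp add: rw_act_def id_def)
  have act3: "\<forall>n \<sigma> \<tau> a. 1 \<le> n \<longrightarrow> \<sigma> permutes {1..n} \<longrightarrow> \<tau> permutes {1..n} \<longrightarrow> a \<in> RW n \<longrightarrow>
        rw_act (\<sigma> \<circ> \<tau>) a = rw_act \<sigma> (rw_act \<tau> a)"
    by (simp add: rw_act_def relab_comp)
  have eqv: "\<forall>m n \<sigma> \<tau> a b x. 1 \<le> m \<longrightarrow> 1 \<le> n \<longrightarrow> \<sigma> permutes {1..m} \<longrightarrow> \<tau> permutes {1..n} \<longrightarrow>
        a \<in> RW m \<longrightarrow> b \<in> RW n \<longrightarrow> x \<in> {1..m} \<longrightarrow>
        rw_comp (rw_act \<sigma> a) (\<sigma> x) (rw_act \<tau> b) = rw_act (block_perm m n x \<sigma> \<tau>) (rw_comp a x b)"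
    using comp_equiv by (auto simp: isT_RW rw_act_def)
  show ?thesis
    unfolding sym_set_operad_def ns_set_operad_def
    using unit closed lu ru seq par act1 act2 act3 eqv by blast
qed

end
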